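(* Let $D$ be an infinite division ring, let $n\ge 2$, and let $N$ be a non-central subgroup of $G:=\mathrm{GL}_n(D)$ (i.e. $N$ is not contained in the center of $G$). Then the following conditions are equivalent: (1) $N$ is almost subnormal in $G$; (2) $N$ is subnormal in $G$; (3) $N$ is normal in $G$; (4) $N$ contains $\mathrm{SL}_n(D)$.
   Context: A subgroup $H$ of a group $K$ is almost subnormal in $K$ if there is a chain of subgroups $H=H_r\le H_{r-1}\le\cdots\le H_1=K$ such that for each $1<i\le r$, either $H_i$ is normal in $H_{i-1}$ or $H_i$ has finite index in $H_{i-1}$. $\mathrm{SL}_n(D)$ denotes the subgroup of $\mathrm{GL}_n(D)$ generated by elementary (transvection) matrices. *)

theory Defs
  imports "HOL-Analysis.Analysis" "HOL-Algebra.Coset" "HOL-Algebra.Generated_Groups"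
begin

definition GL :: "('a::division_ring ^'n^'n) monoid" where
  "GL = \<lparr>carrier = {A. invertible A}, mult = (**), one = mat 1\<rparr>"

definition group_center :: "('a, 'b) monoid_scheme \<Rightarrow> 'a set" where
  "group_center G = {z \<in> carrier G. \<forall>g \<in> carrier G. z \<otimes>\<^bsub>G\<^esub> g = g \<otimes>\<^bsub>G\<^esub> z}"

definition transvection :: "'n \<Rightarrow> 'n \<Rightarrow> 'a::division_ring \<Rightarrow> 'a^'n^'n" where
  "transvection i j a = (\<chi> k l. (if k = l then 1 else 0) + (if k = i \<and> l = j then a else 0))"

definition elementary_matrices :: "('a::division_ring ^'n^'n) set" where
  "elementary_matrices = {transvection i j a | i j a. i \<noteq> j}"

definition SL :: "('a::division_ring ^'n^'n) set" where
  "SL = generate GL elementary_matrices"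

definition almost_subnormal :: "'a set \<Rightarrow> ('a, 'b) monoid_scheme \<Rightarrow> bool" where
  "almost_subnormal H G \<longleftrightarrow> (\<exists>r Hs. Hs 0 = carrier G \<and> Hs r = H \<and>
     (\<forall>i\<le>r. subgroup (Hs i) G) \<and>
     (\<forall>i<r. Hs (Suc i) \<subseteq> Hs i \<and>
        (Hs (Suc i) \<lhd> G\<lparr>carrier := Hs i\<rparr> \<or>
         finite (rcosets\<^bsub>G\<lparr>carrier := Hs i\<rparr>\<^esub> Hs (Suc i)))))"

definition subnormal :: "'a set \<Rightarrow> ('a, 'b) monoid_scheme \<Rightarrow> bool" where
  "subnormal H G \<longleftrightarrow> (\<exists>r Hs. Hs 0 = carrier G \<and> Hs r = H \<and>
     (\<forall>i\<le>r. subgroup (Hs i) G) \<and>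
     (\<forall>i<r. Hs (Suc i) \<subseteq> Hs i \<and> Hs (Suc i) \<lhd> G\<lparr>carrier := Hs i\<rparr>))"

end

theory Submission
  imports Defs
begin


lemma GL_carrier[simp]: "carrier (GL::('a::division_ring^'n^'n) monoid) = {A. invertible A}"
  and GL_mult[simp]: "mult (GL::('a::division_ring^'n^'n) monoid) = (**)"
  and GL_one[simp]: "one (GL::('a::division_ring^'n^'n) monoid) = mat 1"
  by (simp_all add: GL_def)

lemma invertible_mult:
  fixes A B :: "'a::semiring_1^'n^'n"
  assumes "invertible A" "invertible B" shows "invertible (A ** B)"
proof -
  obtain A' where A': "A ** A' = mat 1" "A' ** A = mat 1" using assms(1) unfolding invertible_def by blast
  obtain B' where B': "B ** B' = mat 1" "B' ** B = mat 1" using assms(2) unfolding invertible_def by blast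
  have "(A ** B) ** (B' ** A') = mat 1"
    by (metis A'(1) B'(1) matrix_mul_assoc matrix_mul_rid)
  moreover have "(B' ** A') ** (A ** B) = mat 1"
    by (metis A'(2) B'(2) matrix_mul_assoc matrix_mul_rid)
  ultimately show ?thesis unfolding invertible_def by blast
qed

lemma invertible_mat1: "invertible (mat 1 :: 'a::semiring_1^'n^'n)"
  unfolding invertible_def by (rule exI[of _ "mat 1"]) simp

lemma group_GL: "group (GL::('a::division_ring^'n^'n) monoid)"
proof (rule groupI)
  show "\<And>x y. x \<in> carrier (GL::('a::division_ring^'n^'n) monoid) \<Longrightarrow> y \<in> carrier GL \<Longrightarrow> x \<otimes>\<^bsub>GL\<^esub> y \<in> carrier GL"
    by (simp add: invertible_mult)
  show "\<one>\<^bsub>GL\<^esub> \<in> carrier (GL::('a::division_ring^'n^'n) monoid)" by (simp add: invertible_mat1)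
  show "\<And>x y z. x \<in> carrier (GL::('a::division_ring^'n^'n) monoid) \<Longrightarrow> y \<in> carrier GL \<Longrightarrow> z \<in> carrier GL \<Longrightarrow>
         x \<otimes>\<^bsub>GL\<^esub> y \<otimes>\<^bsub>GL\<^esub> z = x \<otimes>\<^bsub>GL\<^esub> (y \<otimes>\<^bsub>GL\<^esub> z)"
    by (simp add: matrix_mul_assoc)
  show "\<And>x. x \<in> carrier (GL::('a::division_ring^'n^'n) monoid) \<Longrightarrow> \<one>\<^bsub>GL\<^esub> \<otimes>\<^bsub>GL\<^esub> x = x" by simp
  show "\<And>x. x \<in> carrier (GL::('a::division_ring^'n^'n) monoid) \<Longrightarrow> \<exists>y\<in>carrier GL. y \<otimes>\<^bsub>GL\<^esub> x = \<one>\<^bsub>GL\<^esub>"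
  proof -
    fix x :: "'a^'n^'n" assume "x \<in> carrier GL"
    then obtain y where y: "x ** y = mat 1" "y ** x = mat 1" by (auto simp: invertible_def)
    then have "invertible y" unfolding invertible_def by blast
    with y show "\<exists>y\<in>carrier GL. y \<otimes>\<^bsub>GL\<^esub> x = \<one>\<^bsub>GL\<^esub>" by auto
  qed
qed

lemma GL_inv_eq:
  fixes A B :: "'a::division_ring^'n^'n"
  assumes "invertible A" "A ** B = mat 1" shows "inv\<^bsub>GL\<^esub> A = B"
proof -
  interpret group "GL::('a::division_ring^'n^'n) monoid" by (rule group_GL)
  obtain A' where A': "A ** A' = mat 1" "A' ** A = mat 1" using assms(1) unfolding invertible_def by blast
  have "B = A'" by (metis A'(2) assms(2) matrix_mul_assoc matrix_mul_lid matrix_mul_rid)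
  then have "invertible B" using A' unfolding invertible_def by blast
  then show ?thesis using assms A' \<open>B = A'\<close> by (intro inv_equality) auto
qed

lemma GL_inv_mult[simp]:
  fixes A :: "'a::division_ring^'n^'n"
  assumes "invertible A" shows "A ** inv\<^bsub>GL\<^esub> A = mat 1" "inv\<^bsub>GL\<^esub> A ** A = mat 1"
    "invertible (inv\<^bsub>GL\<^esub> A)"
proof -
  interpret group "GL::('a::division_ring^'n^'n) monoid" by (rule group_GL)
  show "A ** inv\<^bsub>GL\<^esub> A = mat 1" "inv\<^bsub>GL\<^esub> A ** A = mat 1" "invertible (inv\<^bsub>GL\<^esub> A)"
    using assms r_inv[of A] l_inv[of A] inv_closed[of A] by auto
qed

text \<open>Row and column operations\<close>

lemma mult_if_l: "(if b then x else y) * z = (if b then x * z else y * (z::'a::times))" by simp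
lemma mult_if_r: "z * (if b then x else y) = (if b then z * x else z * (y::'a::times))" by simp
lemma if_conj_0: "(if P \<and> Q then x else 0) = (if P then (if Q then x else 0) else 0)" by simp


lemma trans_entry: "transvection i j a $ r $ l = (if r = l then 1 else 0) + (if r = i \<and> l = j then a else 0)"
  by (simp add: transvection_def)

lemma trans_mult_left:
  "transvection i j a ** A = (\<chi> r l. A$r$l + (if r = i then a * A$j$l else 0))"
  by (simp add: vec_eq_iff matrix_matrix_mult_def transvection_def distrib_right
      sum.distrib mult_if_l mult_if_r if_conj_0 sum.delta cong: if_cong)

lemma trans_mult_right:
  "A ** transvection i j a = (\<chi> r l. A$r$l + (if l = j then A$r$i * a else 0))"
  by (simp add: vec_eq_iff matrix_matrix_mult_def transvection_def distrib_left
      sum.distrib mult_if_l mult_if_r if_conj_0 sum.delta' cong: if_cong)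

lemma trans_mult_vec:
  "transvection i j a *v x = (\<chi> r. x$r + (if r = i then a * x$j else 0))"
  by (simp add: vec_eq_iff matrix_vector_mult_def transvection_def distrib_right
      sum.distrib mult_if_l mult_if_r if_conj_0 sum.delta cong: if_cong)

lemma mat1_entry: "(mat 1 :: 'a::zero_neq_one^'n^'n) $ r $ l = (if r = l then 1 else 0)"
  by (simp add: mat_def)

lemma trans_add: "i \<noteq> j \<Longrightarrow> transvection i j a ** transvection i j b = transvection i j (a + b)"
  by (auto simp: vec_eq_iff trans_mult_left trans_entry algebra_simps)

lemma trans_zero: "transvection i j 0 = mat 1"
  by (simp add: vec_eq_iff trans_entry mat1_entry)

lemma trans_invertible: "i \<noteq> j \<Longrightarrow> invertible (transvection i j (a::'a::division_ring))"
  unfolding invertible_def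
  by (rule exI[of _ "transvection i j (-a)"]) (simp add: trans_add trans_zero)

lemma trans_inv: "i \<noteq> j \<Longrightarrow> inv\<^bsub>GL\<^esub> (transvection i j (a::'a::division_ring)) = transvection i j (-a)"
  by (rule GL_inv_eq) (simp_all add: trans_invertible trans_add trans_zero)

lemma elementary_sub: "elementary_matrices \<subseteq> carrier (GL::('a::division_ring^'n^'n) monoid)"
  by (auto simp: elementary_matrices_def trans_invertible)

lemma SL_subgroup: "subgroup (SL::('a::division_ring^'n^'n) set) GL"
  unfolding SL_def by (rule group.generate_is_subgroup[OF group_GL elementary_sub])

lemma trans_SL: "i \<noteq> j \<Longrightarrow> transvection i j (a::'a::division_ring) \<in> (SL::('a^'n^'n) set)"
  unfolding SL_def by (rule generate.incl) (auto simp: elementary_matrices_def)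

lemma SL_carrier: "(SL::('a::division_ring^'n^'n) set) \<subseteq> {A. invertible A}"
  using subgroup.subset[OF SL_subgroup] by simp

lemma SL_mult: "A \<in> SL \<Longrightarrow> B \<in> SL \<Longrightarrow> A ** B \<in> (SL::('a::division_ring^'n^'n) set)"
  using subgroup.m_closed[OF SL_subgroup] by fastforce

lemma SL_inv: "A \<in> SL \<Longrightarrow> inv\<^bsub>GL\<^esub> A \<in> (SL::('a::division_ring^'n^'n) set)"
  using subgroup.m_inv_closed[OF SL_subgroup] by fastforce

lemma SL_one: "mat 1 \<in> (SL::('a::division_ring^'n^'n) set)"
  using subgroup.one_closed[OF SL_subgroup] by fastforce

lemma SL_minimal: "subgroup H (GL::('a::division_ring^'n^'n) monoid) \<Longrightarrow>
   (\<And>i j a. i \<noteq> j \<Longrightarrow> transvection i j a \<in> H) \<Longrightarrow> SL \<subseteq> H"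
  unfolding SL_def
  by (rule group.generate_subgroup_incl[OF group_GL]) (auto simp: elementary_matrices_def)




definition ev :: "'n \<Rightarrow> 'a::zero \<Rightarrow> 'a^'n" where "ev i c = (\<chi> r. if r = i then c else 0)"
definition vsr :: "'a::times^'n \<Rightarrow> 'a \<Rightarrow> 'a^'n" where "vsr x c = (\<chi> r. x$r * c)"
definition dg :: "('n \<Rightarrow> 'a::zero) \<Rightarrow> 'a^'n^'n" where "dg f = (\<chi> r l. if r = l then f r else 0)"
definition diag2 :: "'n \<Rightarrow> 'n \<Rightarrow> 'a::division_ring \<Rightarrow> 'a^'n^'n" where
  "diag2 i j d = dg (\<lambda>r. if r = i then d else if r = j then inverse d else 1)"
definition diag1 :: "'n \<Rightarrow> 'a::division_ring \<Rightarrow> 'a^'n^'n" where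
  "diag1 p d = dg (\<lambda>r. if r = p then d else 1)"

lemma ev_nth[simp]: "ev i c $ r = (if r = i then c else 0)" by (simp add: ev_def)
lemma vsr_nth[simp]: "vsr x c $ r = x$r * c" by (simp add: vsr_def)
lemma dg_nth: "dg f $ r $ l = (if r = l then f r else 0)" by (simp add: dg_def)

lemma dg_mult_left: "dg f ** A = (\<chi> r l. f r * A$r$l)"
  by (simp add: vec_eq_iff matrix_matrix_mult_def dg_def mult_if_l mult_if_r if_conj_0 sum.delta cong: if_cong)
lemma dg_mult_right: "A ** dg f = (\<chi> r l. A$r$l * f l)"
  by (simp add: vec_eq_iff matrix_matrix_mult_def dg_def mult_if_l mult_if_r if_conj_0 sum.delta' cong: if_cong)
lemma dg_mult_vec: "dg f *v x = (\<chi> r. f r * x$r)"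
  by (simp add: vec_eq_iff matrix_vector_mult_def dg_def mult_if_l mult_if_r if_conj_0 sum.delta cong: if_cong)

lemma mult_vec_assoc: "(A ** B) *v x = A *v (B *v x)"
  by (simp add: matrix_vector_mul_assoc)

lemma mult_vec_vsr: "A *v vsr x c = vsr (A *v x) (c::'a::semiring_1)"
  by (simp add: vec_eq_iff matrix_vector_mult_def sum_distrib_right mult.assoc)

lemma mat1_vec[simp]: "mat 1 *v x = (x::'a::semiring_1^'n)" by simp

lemma inv_GL_vec:
  fixes A :: "'a::division_ring^'n^'n"
  assumes "invertible A" "A *v x = y" shows "inv\<^bsub>GL\<^esub> A *v y = x"
  using assms by (metis GL_inv_mult(2) matrix_vector_mul_assoc matrix_vector_mul_lid)

lemma dg_invertible:
  assumes "\<And>r. f r \<noteq> (0::'a::division_ring)" shows "invertible (dg f :: 'a^'n^'n)"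
  unfolding invertible_def using assms
  by (intro exI[of _ "dg (\<lambda>r. inverse (f r))"]) (auto simp: dg_mult_left vec_eq_iff dg_nth mat1_entry)

lemma diag2_invertible: "d \<noteq> 0 \<Longrightarrow> invertible (diag2 i j d)"
  unfolding diag2_def by (rule dg_invertible) auto
lemma diag1_invertible: "d \<noteq> 0 \<Longrightarrow> invertible (diag1 p d)"
  unfolding diag1_def by (rule dg_invertible) auto

lemma whitehead_id:
  fixes d :: "'a::division_ring"
  assumes "i \<noteq> j" "d \<noteq> 0"
  shows "transvection i j d ** transvection j i (- inverse d) ** transvection i j d **
         transvection i j (-1) ** transvection j i 1 ** transvection i j (-1) = diag2 i j d"
  using assms
  by (auto simp: vec_eq_iff trans_mult_right trans_entry diag2_def dg_nth algebra_simps)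

lemma diag2_SL: "i \<noteq> j \<Longrightarrow> d \<noteq> 0 \<Longrightarrow> diag2 i j (d::'a::division_ring) \<in> (SL::('a^'n^'n) set)"
  by (metis whitehead_id SL_mult trans_SL)

lemma diag2_inv: "i \<noteq> j \<Longrightarrow> d \<noteq> 0 \<Longrightarrow> inv\<^bsub>GL\<^esub> (diag2 i j d) = diag2 i j (inverse (d::'a::division_ring))"
  by (rule GL_inv_eq[OF diag2_invertible]) (auto simp: diag2_def dg_mult_left dg_nth vec_eq_iff mat1_entry)

lemma diag2_conj: "i \<noteq> j \<Longrightarrow> d \<noteq> 0 \<Longrightarrow>
  diag2 i j d ** transvection i j c ** diag2 i j (inverse d) = transvection i j (d * c * (d::'a::division_ring))"
  by (auto simp: vec_eq_iff diag2_def dg_mult_left dg_mult_right trans_entry)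




lemma clearv:
  fixes x :: "'a::division_ring^'n"
  assumes "x$b \<noteq> 0" "b \<notin> R"
  shows "\<exists>e\<in>SL. (\<forall>y. y$b = 0 \<longrightarrow> e *v y = y) \<and> e *v x = (\<chi> r. if r \<in> R then 0 else x$r)"
proof -
  have "finite R" by simp
  then show ?thesis using assms(2)
  proof (induction R rule: finite_induct)
    case empty
    show ?case by (intro bexI[of _ "mat 1"]) (auto simp: SL_one vec_eq_iff)
  next
    case (insert r R)
    then obtain e where e: "e \<in> SL" "\<forall>y. y$b = 0 \<longrightarrow> e *v y = y"
      "e *v x = (\<chi> r. if r \<in> R then 0 else x$r)" by auto
    have rb: "r \<noteq> b" using insert by auto
    let ?t = "transvection r b (- (x$r) * inverse (x$b))"
    show ?case
    proof (intro bexI[of _ "?t ** e"] conjI allI impI)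
      show "?t ** e \<in> SL" using e(1) rb by (simp add: SL_mult trans_SL)
      fix y :: "'a^'n" assume "y$b = 0"
      then show "(?t ** e) *v y = y" using e(2) by (simp add: mult_vec_assoc trans_mult_vec vec_eq_iff)
    next
      show "(?t ** e) *v x = (\<chi> ra. if ra \<in> insert r R then 0 else x $ ra)"
        using e(3) insert(2,4) assms(1) rb
        by (auto simp: mult_vec_assoc trans_mult_vec vec_eq_iff mult.assoc)
    qed
  qed
qed

lemma elim:
  fixes x :: "'a::division_ring^'n"
  assumes "k \<notin> S" "i \<notin> S" "x$i \<noteq> 0"
  shows "\<exists>e\<in>SL. (\<forall>y. (\<forall>r. r \<notin> S \<longrightarrow> y$r = 0) \<longrightarrow> e *v y = y) \<and> (\<exists>c. c \<noteq> 0 \<and> e *v x = ev k c)"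
proof -
  obtain e1 where e1: "e1 \<in> SL" "\<forall>y. (\<forall>r. r \<notin> S \<longrightarrow> y$r = 0) \<longrightarrow> e1 *v y = y" "(e1 *v x)$k \<noteq> 0"
  proof (cases "x$k = 0")
    case False
    then show ?thesis by (intro that[of "mat 1"]) (auto simp: SL_one)
  next
    case True
    then have ik: "i \<noteq> k" using assms by auto
    show ?thesis
      by (rule that[of "transvection k i 1"]) 
         (use ik True assms in \<open>auto simp: trans_SL trans_mult_vec vec_eq_iff\<close>)
  qed
  obtain e2 where e2: "e2 \<in> SL" "\<forall>y. y$k = 0 \<longrightarrow> e2 *v y = y"
    "e2 *v (e1 *v x) = (\<chi> r. if r \<in> UNIV - {k} then 0 else (e1 *v x)$r)"
    using clearv[OF e1(3), of "UNIV - {k}"] by auto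
  show ?thesis
  proof (intro bexI[of _ "e2 ** e1"] conjI allI impI exI)
    show "e2 ** e1 \<in> SL" using e1 e2 by (simp add: SL_mult)
    fix y :: "'a^'n" assume "\<forall>r. r \<notin> S \<longrightarrow> y$r = 0"
    then show "(e2 ** e1) *v y = y" using e1(2) e2(2) assms(1) by (simp add: mult_vec_assoc)
  next
    show "(e1 *v x)$k \<noteq> 0" by (rule e1(3))
    show "(e2 ** e1) *v x = ev k ((e1 *v x)$k)" using e2(3) by (auto simp: mult_vec_assoc vec_eq_iff)
  qed
qed




lemma mult_vec_ev: "(m *v ev i 1) $ r = m$r$(i::'n::finite) "
  by (simp add: matrix_vector_mult_def mult_if_l mult_if_r if_conj_0 sum.delta' cong: if_cong)

lemma two_elems:
  assumes "CARD('n::finite) \<ge> 2" obtains i j :: "'n::finite" where "i \<noteq> j"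
proof -
  have "\<not> CARD('n) \<le> Suc 0" using assms by simp
  then show ?thesis using that by (auto simp: card_le_Suc0_iff_eq)
qed

lemma central_if_fixes_lines:
  fixes m :: "'a::division_ring^'n^'n"
  assumes "invertible m" "CARD('n) \<ge> 2" "\<forall>y::'a^'n. y \<noteq> 0 \<longrightarrow> (\<exists>c. m *v y = vsr y c)"
  shows "m \<in> group_center GL"
proof -
  have diag: "m$r$l = (if r = l then m$l$l else 0)" for r l
  proof -
    have "ev l (1::'a) \<noteq> 0" by (auto simp: vec_eq_iff)
    then obtain c where c: "m *v ev l 1 = vsr (ev l 1) c" using assms(3) by blast
    have 1: "m$r$l = (if r = l then c else 0)"
      using arg_cong[OF c, of "\<lambda>v. v$r"] by (simp only: mult_vec_ev vsr_nth ev_nth) simp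
    have 2: "m$l$l = c"
      using arg_cong[OF c, of "\<lambda>v. v$l"] by (simp only: mult_vec_ev vsr_nth ev_nth) simp
    show ?thesis using 1 2 by simp
  qed
  have mdg: "m = dg (\<lambda>r. m$r$r)"
    unfolding vec_eq_iff dg_nth using diag by metis
  have mv: "(m *v y) $ r = m$r$r * y$r" for y r
    by (subst mdg) (simp add: dg_mult_vec)
  have comm: "m$j$j * a = a * m$i$i" if "i \<noteq> j" for i j a
  proof -
    let ?y = "(\<chi> r. if r = i then 1 else if r = j then a else 0) :: 'a^'n"
    have "?y $ i \<noteq> 0" by simp
    then have "?y \<noteq> 0" by (metis zero_index)
    then obtain c where c: "m *v ?y = vsr ?y c" using assms(3) by blast
    have "(m *v ?y)$i = vsr ?y c $ i" "(m *v ?y)$j = vsr ?y c $ j" using c by simp_all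
    then show ?thesis using that by (simp add: mv)
  qed
  obtain i0 j0 :: 'n where ij: "i0 \<noteq> j0" using two_elems[OF assms(2)] by blast
  define lam where "lam = m$i0$i0"
  have all: "m$j$j = lam" for j
  proof (cases "j = i0")
    case False then show ?thesis using comm[of i0 j 1] lam_def by simp
  qed (simp add: lam_def)
  have cen: "lam * a = a * lam" for a using comm[OF ij, of a] all by simp
  have "m ** g = g ** m" for g :: "'a^'n^'n"
    by (subst (1 2) mdg) (simp add: dg_mult_left dg_mult_right all cen)
  then show ?thesis using assms(1) by (simp add: group_center_def)
qed

lemma perfect_aux:
  fixes P :: "'a::division_ring \<Rightarrow> bool"
  assumes inf: "infinite (UNIV::'a set)"
    and add: "\<And>x y. P x \<Longrightarrow> P y \<Longrightarrow> P (x + y)" and neg: "\<And>x. P x \<Longrightarrow> P (-x)"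
    and f: "\<And>d c. d \<noteq> 0 \<Longrightarrow> P (d*c*d - c)"
  shows "P z"
proof -
  have key: "P v" if "v \<noteq> 1" "v \<noteq> 2" for v
  proof -
    define x where "x = v - 2"
    have vx: "v = x + 1 + 1" by (simp add: x_def algebra_simps flip: one_add_one)
    have x0: "x \<noteq> 0" "x + 1 \<noteq> 0"
    proof -
      show "x \<noteq> 0" using that(2) vx by (auto simp: one_add_one add.assoc)
      show "x + 1 \<noteq> 0" using that(1) vx by auto
    qed
    have e: "v = ((x+1)*x*(x+1) - x) + (-(x*x*x - x)) + (-(x*1*x - 1)) + (-(x*1*x - 1))"
      using vx by (simp add: algebra_simps)
    show ?thesis unfolding e by (intro add neg f x0)
  qed
  obtain v :: 'a where v: "v \<notin> {1, 2, z - 1, z - 2}"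
    using ex_new_if_finite[OF inf, of "{1, 2, z - 1, z - 2}"] by auto
  have "z = v + (z - v)" by simp
  also have "P \<dots>"
  proof (intro add key)
    show "v \<noteq> 1" "v \<noteq> 2" using v by auto
    show "z - v \<noteq> 1" using v by (auto simp: algebra_simps)
    show "z - v \<noteq> 2" using v by (auto simp: algebra_simps)
  qed
  finally show ?thesis .
qed




definition rowp :: "'n \<Rightarrow> 'a::semiring_1^'n \<Rightarrow> 'a^'n^'n" where
  "rowp p w = (\<chi> r l. (if r = l then 1 else 0) + (if r = p then w$l else 0))"

lemma rowp_mult_left: "rowp p w ** A = (\<chi> r l. A$r$l + (if r = p then (w v* A)$l else 0))"
  by (simp add: vec_eq_iff matrix_matrix_mult_def rowp_def vector_matrix_mult_def distrib_right
      sum.distrib mult_if_l mult_if_r if_conj_0 sum.delta cong: if_cong)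

lemma rowp_mult_right: "A ** rowp p w = (\<chi> r l. A$r$l + A$r$p * w$l)"
  by (simp add: vec_eq_iff matrix_matrix_mult_def rowp_def distrib_left
      sum.distrib mult_if_l mult_if_r if_conj_0 sum.delta' cong: if_cong)

lemma rowp_entry: "rowp p w $ r $ l = (if r = l then 1 else 0) + (if r = p then w$l else 0)"
  by (simp add: rowp_def)

lemma vm_rowp: "w $ p = 0 \<Longrightarrow> (w v* rowp p w') = w"
  by (simp add: vec_eq_iff vector_matrix_mult_def rowp_def distrib_left
      sum.distrib mult_if_l mult_if_r if_conj_0 sum.delta' cong: if_cong)

lemma rowp_mult: "w $ p = 0 \<Longrightarrow> rowp p w ** rowp p w' = rowp p (w + w')"
  by (simp add: rowp_mult_left vm_rowp vec_eq_iff rowp_entry algebra_simps)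

lemma rowp_zero: "rowp p 0 = mat 1"
  by (simp add: vec_eq_iff rowp_entry mat1_entry)

lemma rowp_invertible: "w $ p = 0 \<Longrightarrow> invertible (rowp p (w::'a::division_ring^'n))"
  unfolding invertible_def
  by (rule exI[of _ "rowp p (-w)"]) (simp add: rowp_mult rowp_zero)

lemma rowp_inv: "w $ p = 0 \<Longrightarrow> inv\<^bsub>GL\<^esub> (rowp p (w::'a::division_ring^'n)) = rowp p (-w)"
  by (rule GL_inv_eq) (simp_all add: rowp_invertible rowp_mult rowp_zero)

lemma rowp_trans: "w $ p = 0 \<Longrightarrow> j \<noteq> p \<Longrightarrow> rowp p w ** transvection p j a = rowp p (w + ev j a)"
  by (auto simp: trans_mult_right vec_eq_iff rowp_entry)

lemma rowp_SL: "w $ p = 0 \<Longrightarrow> rowp p (w::'a::division_ring^'n) \<in> SL"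
proof -
  have "\<forall>w::'a^'n. w$p = 0 \<and> (\<forall>l. l \<notin> R \<longrightarrow> w$l = 0) \<longrightarrow> rowp p w \<in> SL" for R :: "'n set"
  proof -
    have "finite R" by simp
    then show ?thesis
    proof (induction R rule: finite_induct)
      case empty
      show ?case
      proof (intro allI impI)
        fix w :: "'a^'n" assume "w$p = 0 \<and> (\<forall>l. l \<notin> {} \<longrightarrow> w$l = 0)"
        then have "w = 0" by (auto simp: vec_eq_iff)
        then show "rowp p w \<in> SL" by (simp add: rowp_zero SL_one)
      qed
    next
      case (insert j R)
      show ?case
      proof (intro allI impI)
        fix w :: "'a^'n" assume w: "w$p = 0 \<and> (\<forall>l. l \<notin> insert j R \<longrightarrow> w$l = 0)"
        show "rowp p w \<in> SL"
        proof (cases "j = p")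
          case True
          then show ?thesis using w insert.IH by auto
        next
          case False
          define w0 where "w0 = (\<chi> l. if l = j then 0 else w$l)"
          have w0: "w0$p = 0 \<and> (\<forall>l. l \<notin> R \<longrightarrow> w0$l = 0)" using w by (auto simp: w0_def)
          have ww: "w0 + ev j (w$j) = w" by (simp add: w0_def vec_eq_iff)
          have "rowp p w = rowp p w0 ** transvection p j (w$j)"
            using w0 False by (simp add: rowp_trans ww)
          then show ?thesis using insert.IH w0 False by (simp add: SL_mult trans_SL)
        qed
      qed
    qed
  qed
  then show "w $ p = 0 \<Longrightarrow> rowp p w \<in> SL" by (metis UNIV_I)
qed

lemma smul_vm: "(c *s x) v* A = c *s (x v* (A::'a::semiring_1^'n^'m))"
  by (simp add: vec_eq_iff vector_matrix_mult_def sum_distrib_left mult.assoc)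

lemma conj_rowp:
  fixes h :: "'a::division_ring^'n^'n"
  assumes h: "invertible h" "h *v ev p 1 = ev p d" "d \<noteq> 0" and w: "w$p = 0"
  shows "\<exists>w'. w'$p = 0 \<and> h ** rowp p w ** inv\<^bsub>GL\<^esub> h = rowp p w'"
proof -
  let ?h' = "inv\<^bsub>GL\<^esub> h"
  have hcol: "h$r$p = (if r = p then d else 0)" for r
    using arg_cong[OF h(2), of "\<lambda>v. v$r"] by (simp add: mult_vec_ev)
  have e1: "ev p d = vsr (ev p 1) d" by (simp add: vec_eq_iff)
  have "vsr (?h' *v ev p 1) d = ev p 1" using inv_GL_vec[OF h(1,2)] e1 mult_vec_vsr by metis
  moreover have "?h' *v ev p 1 = vsr (vsr (?h' *v ev p 1) d) (inverse d)"
    by (simp add: vec_eq_iff mult.assoc h(3))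
  ultimately have h'e: "?h' *v ev p 1 = ev p (inverse d)" by (simp add: vec_eq_iff)
  have h'col: "?h'$r$p = (if r = p then inverse d else 0)" for r
    using arg_cong[OF h'e, of "\<lambda>v. v$r"] by (simp add: mult_vec_ev)
  define w' where "w' = (d *s w) v* ?h'"
  have w'p: "w'$p = 0"
    by (simp add: w'_def vector_matrix_mult_def h'col mult_if_l mult_if_r if_conj_0 sum.delta' w cong: if_cong)
  have "w' v* h = d *s w"
    unfolding w'_def by (simp add: vector_matrix_mul_assoc h(1))
  then have eq: "rowp p w' ** h = h ** rowp p w"
    by (simp add: rowp_mult_left rowp_mult_right vec_eq_iff hcol)
  have "h ** rowp p w ** ?h' = rowp p w' ** h ** ?h'" by (simp add: eq)
  also have "\<dots> = rowp p w'" by (simp add: h(1) flip: matrix_mul_assoc)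
  finally show ?thesis using w'p by blast
qed




lemma GL_inv_inv: "invertible (A::'a::division_ring^'n^'n) \<Longrightarrow> inv\<^bsub>GL\<^esub> (inv\<^bsub>GL\<^esub> A) = A"
  using group.inv_inv[OF group_GL, of A] by simp

lemma GL_inv_prod: "invertible (A::'a::division_ring^'n^'n) \<Longrightarrow> invertible B \<Longrightarrow>
   inv\<^bsub>GL\<^esub> (A ** B) = inv\<^bsub>GL\<^esub> B ** inv\<^bsub>GL\<^esub> A"
  using group.inv_mult_group[OF group_GL, of A B] by simp

lemma GL_cancel:
  fixes A :: "'a::division_ring^'n^'n"
  assumes "invertible A"
  shows "inv\<^bsub>GL\<^esub> A ** (A ** X) = X" "A ** (inv\<^bsub>GL\<^esub> A ** X) = X"
  using assms by (simp_all add: matrix_mul_assoc)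

lemma SL_invertible: "A \<in> SL \<Longrightarrow> invertible (A::'a::division_ring^'n^'n)"
  using SL_carrier by auto

lemma ev_vsr: "ev p c = vsr (ev p 1) (c::'a::semiring_1)"
  by (simp add: vec_eq_iff)

lemma vsr_vsr: "vsr (vsr x c) d = vsr x (c * (d::'a::semiring_1))"
  by (simp add: vec_eq_iff mult.assoc)

lemma vsr_one: "vsr x 1 = (x::'a::semiring_1^'n)" by (simp add: vec_eq_iff)

lemma V_lemma:
  fixes y :: "'a::division_ring^'n"
  assumes "y \<noteq> 0"
  shows "\<exists>g\<in>SL. \<exists>c. c \<noteq> 0 \<and> g *v ev p 1 = vsr y c"
proof -
  obtain i where i: "y$i \<noteq> 0" using assms by (auto simp: vec_eq_iff)
  obtain e c where e: "e \<in> SL" "c \<noteq> 0" "e *v y = ev p c"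
    using elim[of p "{}" i y] i by auto
  have "inv\<^bsub>GL\<^esub> e *v ev p c = y" by (rule inv_GL_vec[OF SL_invertible[OF e(1)] e(3)])
  then have "vsr (inv\<^bsub>GL\<^esub> e *v ev p 1) c = y" by (metis ev_vsr mult_vec_vsr)
  then have "vsr (vsr (inv\<^bsub>GL\<^esub> e *v ev p 1) c) (inverse c) = vsr y (inverse c)" by simp
  then have "inv\<^bsub>GL\<^esub> e *v ev p 1 = vsr y (inverse c)" using e(2) by (simp add: vsr_vsr vsr_one)
  moreover have "inv\<^bsub>GL\<^esub> e \<in> SL" using SL_inv e(1) by blast
  moreover have "inverse c \<noteq> 0" using e(2) by simp
  ultimately show ?thesis by blast
qed

lemma STAB:
  fixes x :: "'a::division_ring^'n"
  assumes "x$k \<noteq> 0" "k \<noteq> p" "q \<noteq> p"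
  shows "\<exists>h\<in>SL. h *v ev p 1 = ev p 1 \<and> (\<exists>c. c \<noteq> 0 \<and> h *v x = ev q c)"
proof -
  obtain e where e: "e \<in> SL" "\<forall>y. (\<forall>r. r \<notin> {p} \<longrightarrow> y$r = 0) \<longrightarrow> e *v y = y"
    "\<exists>c. c \<noteq> 0 \<and> e *v x = ev q c"
    using elim[of q "{p}" k x] assms by auto
  have "e *v ev p 1 = ev p 1" using e(2) by auto
  then show ?thesis using e by blast
qed

lemma trans_rowp: "j \<noteq> p \<Longrightarrow> transvection p j a = rowp p (ev j a)"
  by (auto simp: vec_eq_iff trans_entry rowp_entry)

lemma trans_id3: "i \<noteq> p \<Longrightarrow> j \<noteq> p \<Longrightarrow> i \<noteq> j \<Longrightarrow>
  transvection i p 1 ** transvection p j a ** transvection i p (-1) ** transvection p j (-a)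
   = transvection i j (a::'a::division_ring)"
  by (auto simp: vec_eq_iff trans_mult_right trans_entry)

lemma trans_idw: "i \<noteq> p \<Longrightarrow>
  transvection p i 1 ** transvection i p (-1) ** transvection p i 1 ** transvection p i (-a)
   = transvection i p a ** (transvection p i 1 ** transvection i p (-1) ** transvection p i (1::'a::division_ring))"
  by (auto simp: vec_eq_iff trans_mult_right trans_mult_left trans_entry)

lemma KL:
  fixes M :: "('a::division_ring^'n^'n) set"
  assumes inf: "infinite (UNIV::'a set)" and card: "CARD('n) \<ge> 2"
    and sub: "subgroup M GL"
    and nrm: "\<And>e m. e \<in> SL \<Longrightarrow> m \<in> M \<Longrightarrow> e ** m ** inv\<^bsub>GL\<^esub> e \<in> M"
    and nc: "\<not> M \<subseteq> group_center GL"
  shows "SL \<subseteq> M"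
proof -
  have Minv: "invertible m" if "m \<in> M" for m using subgroup.subset[OF sub] that by auto
  have Mmul: "m ** m' \<in> M" if "m \<in> M" "m' \<in> M" for m m'
    using subgroup.m_closed[OF sub] that by fastforce
  have Mi: "inv\<^bsub>GL\<^esub> m \<in> M" if "m \<in> M" for m using subgroup.m_inv_closed[OF sub] that by fastforce
  have M1: "mat 1 \<in> M" using subgroup.one_closed[OF sub] by simp
  obtain p q :: 'n where pq: "p \<noteq> q" using two_elems[OF card] by blast
  define ep where "ep = (ev p 1 :: 'a^'n)"
  have ep0: "ep \<noteq> 0" unfolding ep_def by (metis ev_nth zero_index one_neq_zero)
  obtain m y where my: "m \<in> M" "y \<noteq> 0" "\<And>c. m *v y \<noteq> vsr y c"
    using nc central_if_fixes_lines[OF _ card] Minv by blast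
  obtain g c where g: "g \<in> SL" "c \<noteq> 0" "g *v ep = vsr y c" using V_lemma[OF my(2)] ep_def by blast
  have ginv: "invertible g" using g(1) by (rule SL_invertible)
  define m1 where "m1 = inv\<^bsub>GL\<^esub> g ** m ** g"
  have m1M: "m1 \<in> M"
    using nrm[OF SL_inv[OF g(1)] my(1)] GL_inv_inv[OF ginv] by (simp add: m1_def)
  have gm1: "g ** m1 = m ** g" unfolding m1_def using ginv by (simp add: matrix_mul_assoc)
  have x1: "\<exists>k. k \<noteq> p \<and> (m1 *v ep)$k \<noteq> 0"
  proof (rule ccontr)
    assume "\<not> ?thesis"
    then have "m1 *v ep = ev p ((m1 *v ep)$p)" by (auto simp: vec_eq_iff)
    then have "m *v (g *v ep) = g *v ev p ((m1 *v ep)$p)" by (metis gm1 mult_vec_assoc)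
    then have "m *v vsr y c = vsr (vsr y c) ((m1 *v ep)$p)" by (metis g(3) ep_def ev_vsr mult_vec_vsr)
    then have "vsr (m *v y) c = vsr (vsr y c) ((m1 *v ep)$p)" by (simp add: mult_vec_vsr)
    then have "vsr (vsr (m *v y) c) (inverse c) = vsr (vsr (vsr y c) ((m1 *v ep)$p)) (inverse c)" by simp
    then have "m *v y = vsr y (c * (m1 *v ep)$p * inverse c)" using g(2) by (simp add: vsr_vsr vsr_one mult.assoc)
    then show False using my(3) by blast
  qed
  then obtain k1 where k1: "k1 \<noteq> p" "(m1 *v ep)$k1 \<noteq> 0" by blast
  \<comment> \<open>step 2: transitivity\<close>
  have trans: "\<exists>m\<in>M. \<exists>c. c \<noteq> 0 \<and> m *v ep = vsr (g' *v ep) c" if g': "g' \<in> SL" for g'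
  proof -
    have g'inv: "invertible g'" using g' by (rule SL_invertible)
    let ?y = "g' *v ep"
    show ?thesis
    proof (cases "\<forall>k. k \<noteq> p \<longrightarrow> ?y$k = 0")
      case True
      then have ye: "?y = ev p (?y$p)" by (auto simp: vec_eq_iff)
      have "?y$p \<noteq> 0"
      proof
        assume "?y$p = 0"
        then have "?y = 0" using ye by (simp add: vec_eq_iff)
        then have "inv\<^bsub>GL\<^esub> g' *v 0 = ep" using inv_GL_vec[OF g'inv] by blast
        then show False using ep0 by (simp add: matrix_vector_mult_def vec_eq_iff)
      qed
      moreover have "mat 1 *v ep = vsr ?y (inverse (?y$p))"
        using \<open>?y$p \<noteq> 0\<close> by (subst ye) (simp add: vec_eq_iff ep_def)
      ultimately show ?thesis using M1 by (intro bexI[of _ "mat 1"] exI[of _ "inverse (?y$p)"]) auto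
    next
      case False
      then obtain k2 where k2: "k2 \<noteq> p" "?y$k2 \<noteq> 0" by blast
      obtain h1 c1 where h1: "h1 \<in> SL" "h1 *v ep = ep" "c1 \<noteq> 0" "h1 *v (m1 *v ep) = ev q c1"
        using STAB[OF k1(2) k1(1) pq[symmetric]] ep_def by blast
      obtain h2 c2 where h2: "h2 \<in> SL" "h2 *v ep = ep" "c2 \<noteq> 0" "h2 *v ?y = ev q c2"
        using STAB[OF k2(2) k2(1) pq[symmetric]] ep_def by blast
      define h where "h = inv\<^bsub>GL\<^esub> h2 ** h1"
      have hSL: "h \<in> SL" unfolding h_def by (intro SL_mult SL_inv h1(1) h2(1))
      have hinv: "invertible h" using hSL by (rule SL_invertible)
      have h2i: "inv\<^bsub>GL\<^esub> h2 *v ep = ep" by (rule inv_GL_vec[OF SL_invertible[OF h2(1)] h2(2)])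
      have hep: "h *v ep = ep" by (simp add: h_def mult_vec_assoc h1(2) h2i)
      have hiep: "inv\<^bsub>GL\<^esub> h *v ep = ep" by (rule inv_GL_vec[OF hinv hep])
      have yq: "inv\<^bsub>GL\<^esub> h2 *v ev q c2 = ?y" by (rule inv_GL_vec[OF SL_invertible[OF h2(1)] h2(4)])
      define mm where "mm = h ** m1 ** inv\<^bsub>GL\<^esub> h"
      have mmM: "mm \<in> M" unfolding mm_def by (rule nrm[OF hSL m1M])
      have "mm *v ep = h *v (m1 *v ep)"
        by (simp add: mm_def mult_vec_assoc hiep)
      also have "\<dots> = inv\<^bsub>GL\<^esub> h2 *v ev q c1"
        by (simp add: h_def mult_vec_assoc h1(4))
      also have "ev q c1 = vsr (ev q c2) (inverse c2 * c1)"
        using h2(3) by (simp add: vec_eq_iff mult.assoc[symmetric])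
      also have "inv\<^bsub>GL\<^esub> h2 *v vsr (ev q c2) (inverse c2 * c1) = vsr ?y (inverse c2 * c1)"
        by (simp add: mult_vec_vsr yq)
      finally show ?thesis using mmM h1(3) h2(3) by (intro bexI[of _ mm] exI[of _ "inverse c2 * c1"]) auto
    qed
  qed
  define U where "U = {rowp p w | w. w$p = (0::'a)}"
  have U_SL: "u \<in> SL" if "u \<in> U" for u using that rowp_SL unfolding U_def by blast
  have U_invt: "invertible u" if "u \<in> U" for u using U_SL[OF that] by (rule SL_invertible)
  have U_inv: "inv\<^bsub>GL\<^esub> u \<in> U" if "u \<in> U" for u
    using that rowp_inv unfolding U_def by fastforce
  have U_mul: "u ** u' \<in> U" if "u \<in> U" "u' \<in> U" for u u'
    using that rowp_mult unfolding U_def by fastforce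
  have U_comm: "u ** u' = u' ** u" if uu: "u \<in> U" "u' \<in> U" for u u'
  proof -
    obtain w w' where "u = rowp p w" "w$p = 0" "u' = rowp p w'" "w'$p = 0" using uu unfolding U_def by blast
    then show ?thesis by (simp add: rowp_mult add.commute)
  qed
  have U1: "mat 1 \<in> U" unfolding U_def using rowp_zero[of p] by (metis (mono_tags, lifting) mem_Collect_eq zero_index)
  define MU where "MU = {m ** u | m u. m \<in> M \<and> u \<in> U}"
  have MU_sub: "subgroup MU GL"
  proof (rule group.subgroupI[OF group_GL])
    show "MU \<subseteq> carrier GL" unfolding MU_def using Minv U_invt invertible_mult by fastforce
    show "MU \<noteq> {}" unfolding MU_def using M1 U1 by blast
  next
    fix a assume "a \<in> MU"
    then obtain m u where a: "a = m ** u" "m \<in> M" "u \<in> U" unfolding MU_def by blast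
    have ia: "inv\<^bsub>GL\<^esub> a = (inv\<^bsub>GL\<^esub> u ** inv\<^bsub>GL\<^esub> m ** u) ** inv\<^bsub>GL\<^esub> u"
      using a Minv U_invt by (simp add: GL_inv_prod flip: matrix_mul_assoc)
    have "inv\<^bsub>GL\<^esub> u ** inv\<^bsub>GL\<^esub> m ** u \<in> M"
      using nrm[OF U_SL[OF U_inv[OF a(3)]] Mi[OF a(2)]] GL_inv_inv[OF U_invt[OF a(3)]] by simp
    then show "inv\<^bsub>GL\<^esub> a \<in> MU" unfolding MU_def using ia U_inv[OF a(3)] by blast
  next
    fix a b assume "a \<in> MU" "b \<in> MU"
    then obtain m u m' u' where a: "a = m ** u" "m \<in> M" "u \<in> U"
      and b: "b = m' ** u'" "m' \<in> M" "u' \<in> U" unfolding MU_def by blast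
    have e: "a ** b = (m ** (u ** m' ** inv\<^bsub>GL\<^esub> u)) ** (u ** u')"
      using a b U_invt[OF a(3)] by (simp add: GL_cancel flip: matrix_mul_assoc)
    have "m ** (u ** m' ** inv\<^bsub>GL\<^esub> u) \<in> M" using a b by (intro Mmul nrm U_SL)
    then show "a \<otimes>\<^bsub>GL\<^esub> b \<in> MU" unfolding MU_def using e U_mul[OF a(3) b(3)] by auto
  qed
  have MU_mul: "a ** b \<in> MU" if "a \<in> MU" "b \<in> MU" for a b
    using subgroup.m_closed[OF MU_sub] that by fastforce
  have U_MU: "u \<in> MU" if "u \<in> U" for u unfolding MU_def using M1 that by force
  have MUconj: "g' ** u ** inv\<^bsub>GL\<^esub> g' \<in> MU" if g': "g' \<in> SL" and u: "u \<in> U" for g' u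
  proof -
    obtain mm c where mm: "mm \<in> M" "c \<noteq> 0" "mm *v ep = vsr (g' *v ep) c" using trans[OF g'] by blast
    have mminv: "invertible mm" using mm(1) by (rule Minv)
    have g'inv: "invertible g'" using g' by (rule SL_invertible)
    define h' where "h' = inv\<^bsub>GL\<^esub> mm ** g'"
    have h'inv: "invertible h'" unfolding h'_def using mminv g'inv by (simp add: invertible_mult)
    have "g' *v ep = vsr (vsr (g' *v ep) c) (inverse c)" using mm(2) by (simp add: vsr_vsr vsr_one)
    then have gep: "g' *v ep = vsr (mm *v ep) (inverse c)" using mm(3) by simp
    have "h' *v ep = vsr (inv\<^bsub>GL\<^esub> mm *v (mm *v ep)) (inverse c)"
      by (simp add: h'_def mult_vec_assoc gep mult_vec_vsr)
    also have "\<dots> = ev p (inverse c)" using mminv by (simp add: ep_def vec_eq_iff flip: mult_vec_assoc)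
    finally have h'ep: "h' *v ev p 1 = ev p (inverse c)" unfolding ep_def .
    obtain w where w: "u = rowp p w" "w$p = 0" using u unfolding U_def by blast
    obtain w' where w': "w'$p = 0" "h' ** rowp p w ** inv\<^bsub>GL\<^esub> h' = rowp p w'"
      using conj_rowp[OF h'inv h'ep _ w(2)] mm(2) by auto
    have u'U: "rowp p w' \<in> U" using w' unfolding U_def by blast
    have gmh: "g' = mm ** h'" using mminv by (simp add: h'_def matrix_mul_assoc)
    have "g' ** u ** inv\<^bsub>GL\<^esub> g' = mm ** (h' ** u ** inv\<^bsub>GL\<^esub> h') ** inv\<^bsub>GL\<^esub> mm"
      using mminv h'inv by (simp add: gmh GL_inv_prod matrix_mul_assoc)
    also have "\<dots> = mm ** rowp p w' ** inv\<^bsub>GL\<^esub> mm" using w w' by simp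
    also have "\<dots> = (mm ** (rowp p w' ** inv\<^bsub>GL\<^esub> mm ** inv\<^bsub>GL\<^esub> (rowp p w'))) ** rowp p w'"
      using U_invt[OF u'U] by (simp add: GL_cancel flip: matrix_mul_assoc)
    also have "\<dots> \<in> MU"
    proof -
      have "rowp p w' ** inv\<^bsub>GL\<^esub> mm ** inv\<^bsub>GL\<^esub> (rowp p w') \<in> M"
        by (rule nrm[OF U_SL[OF u'U] Mi[OF mm(1)]])
      then show ?thesis unfolding MU_def using mm(1) Mmul u'U by blast
    qed
    finally show ?thesis .
  qed
  have trMU: "transvection i j a \<in> MU" if ij: "i \<noteq> j" for i j a
  proof (cases "i = p")
    case True
    have "rowp p (ev j a) \<in> U" using ij True unfolding U_def by auto
    then show ?thesis using ij True trans_rowp[of j p a] U_MU by auto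
  next
    case ip: False
    show ?thesis
    proof (cases "j = p")
      case False
      have "transvection i j a = (transvection i p 1 ** transvection p j a ** inv\<^bsub>GL\<^esub> (transvection i p 1))
            ** transvection p j (-a)"
        by (simp only: trans_inv[OF ip] trans_id3[OF ip False ij])
      moreover have "transvection i p 1 ** transvection p j a ** inv\<^bsub>GL\<^esub> (transvection i p 1) \<in> MU"
        using ip False by (intro MUconj trans_SL) (auto simp: U_def trans_rowp)
      moreover have "transvection p j (-a) \<in> MU" using False by (intro U_MU) (auto simp: U_def trans_rowp)
      ultimately show ?thesis using MU_mul by metis
    next
      case True
      define w where "w = transvection p i 1 ** transvection i p (-1) ** transvection p i (1::'a)"
      have wSL: "w \<in> SL" unfolding w_def using ip by (intro SL_mult trans_SL) auto
      have "w ** transvection p i (-a) ** inv\<^bsub>GL\<^esub> w = transvection i p a ** w ** inv\<^bsub>GL\<^esub> w"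
        using trans_idw[OF ip, of a] unfolding w_def by simp
      also have "\<dots> = transvection i p a" using SL_invertible[OF wSL] by (simp flip: matrix_mul_assoc)
      finally have "transvection i p a = w ** transvection p i (-a) ** inv\<^bsub>GL\<^esub> w" by simp
      moreover have "w ** transvection p i (-a) ** inv\<^bsub>GL\<^esub> w \<in> MU"
        using ip by (intro MUconj wSL) (auto simp: U_def trans_rowp)
      ultimately show ?thesis using True by simp
    qed
  qed
  have SL_MU: "SL \<subseteq> MU" by (rule SL_minimal[OF MU_sub trMU])
  have comm: "e ** f ** inv\<^bsub>GL\<^esub> e ** inv\<^bsub>GL\<^esub> f \<in> M" if ef: "e \<in> SL" "f \<in> SL" for e f
  proof -
    obtain m u where a: "e = m ** u" "m \<in> M" "u \<in> U" using SL_MU ef(1) unfolding MU_def by blast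
    obtain m' u' where b: "f = m' ** u'" "m' \<in> M" "u' \<in> U" using SL_MU ef(2) unfolding MU_def by blast
    have inv: "invertible m" "invertible u" "invertible m'" "invertible u'"
      using a b Minv U_invt by auto
    have c: "inv\<^bsub>GL\<^esub> u ** u' = u' ** inv\<^bsub>GL\<^esub> u" using U_comm[OF U_inv[OF a(3)] b(3)] .
    have cX: "inv\<^bsub>GL\<^esub> u ** (u' ** X) = u' ** (inv\<^bsub>GL\<^esub> u ** X)" for X
      by (simp add: matrix_mul_assoc c)
    have "e ** f ** inv\<^bsub>GL\<^esub> e ** inv\<^bsub>GL\<^esub> f =
          m ** (u ** (m' ** (u' ** (inv\<^bsub>GL\<^esub> u ** (inv\<^bsub>GL\<^esub> m ** (inv\<^bsub>GL\<^esub> u' ** inv\<^bsub>GL\<^esub> m'))))))"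
      using inv by (simp add: a(1) b(1) GL_inv_prod matrix_mul_assoc)
    also have "\<dots> = m ** (u ** (m' ** (inv\<^bsub>GL\<^esub> u ** (u' ** (inv\<^bsub>GL\<^esub> m ** (inv\<^bsub>GL\<^esub> u' ** inv\<^bsub>GL\<^esub> m'))))))"
      by (simp add: cX)
    also have "\<dots> = m ** (u ** m' ** inv\<^bsub>GL\<^esub> u) ** (u' ** inv\<^bsub>GL\<^esub> m ** inv\<^bsub>GL\<^esub> u') ** inv\<^bsub>GL\<^esub> m'"
      by (simp add: matrix_mul_assoc)
    also have "\<dots> \<in> M"
      using a b by (intro Mmul Mi nrm U_SL)
    finally show ?thesis .
  qed
  \<comment> \<open>step 5: perfectness\<close>
  have tM: "transvection i j z \<in> M" if ij: "i \<noteq> j" for i j z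
  proof (rule perfect_aux[OF inf, of "\<lambda>x. transvection i j x \<in> M"])
    show "transvection i j (x + y) \<in> M" if "transvection i j x \<in> M" "transvection i j y \<in> M" for x y
      using Mmul[OF that] trans_add[OF ij, of x y] by metis
    show "transvection i j (-x) \<in> M" if "transvection i j x \<in> M" for x
      using Mi[OF that] trans_inv[OF ij, of x] by metis
    show "transvection i j (d * c * d - c) \<in> M" if "d \<noteq> 0" for d c
    proof -
      have "diag2 i j d ** transvection i j c ** inv\<^bsub>GL\<^esub> (diag2 i j d) ** inv\<^bsub>GL\<^esub> (transvection i j c)
            = transvection i j (d * c * d - c)"
        using ij that by (simp add: diag2_inv trans_inv diag2_conj trans_add)
      moreover have "diag2 i j d ** transvection i j c ** inv\<^bsub>GL\<^esub> (diag2 i j d) ** inv\<^bsub>GL\<^esub> (transvection i j c) \<in> M"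
        using ij that by (intro comm diag2_SL trans_SL)
      ultimately show ?thesis by simp
    qed
  qed
  show ?thesis by (rule SL_minimal[OF sub tM])
qed




lemma col_entry: "(A *v ev l 1) $ r = A$r$(l::'n::finite)"
  by (rule mult_vec_ev)

lemma not_in_span:
  fixes A :: "'a::division_ring^'n^'n"
  assumes A: "invertible A" and S: "\<forall>s\<in>S. A *v ev s 1 = ev s 1" and k: "k \<notin> S"
  shows "\<exists>i. i \<notin> S \<and> (A *v ev k 1)$i \<noteq> 0"
proof (rule ccontr)
  assume "\<not> ?thesis"
  then have x0: "\<And>i. i \<notin> S \<Longrightarrow> (A *v ev k 1)$i = 0" by blast
  let ?x = "A *v ev k 1"
  define y where "y = (\<chi> l. if l \<in> S then ?x$l else 0)"
  have As: "A$r$l = (if r = l then 1 else 0)" if "l \<in> S" for r l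
    using arg_cong[OF S[rule_format, OF that], of "\<lambda>v. v$r"] by (simp add: col_entry)
  have tm: "A$r$l * y$l = (if l = r then (if r \<in> S then ?x$r else 0) else 0)" for r l
    by (cases "l \<in> S") (auto simp: y_def As)
  have "A *v y = ?x"
  proof -
    have "(A *v y)$r = ?x$r" for r
      using x0[of r] by (simp add: matrix_vector_mult_def tm sum.delta') 
    then show ?thesis by (simp add: vec_eq_iff)
  qed
  then have "inv\<^bsub>GL\<^esub> A *v ?x = y" using inv_GL_vec[OF A] by blast
  moreover have "inv\<^bsub>GL\<^esub> A *v ?x = ev k 1" using inv_GL_vec[OF A refl] .
  ultimately have "y = ev k 1" by simp
  then have "y$k = 1" by simp
  then show False using k by (simp add: y_def)
qed

lemma diag2_fix:
  fixes y :: "'a::division_ring^'n"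
  assumes "y$k = 0" "y$p = 0"
  shows "diag2 k p d *v y = y"
  using assms by (auto simp: diag2_def dg_mult_vec vec_eq_iff)

lemma decomp:
  fixes g :: "'a::division_ring^'n^'n"
  assumes g: "invertible g" and pq: "p \<noteq> (q::'n)"
  shows "\<exists>e\<in>SL. \<exists>c. c \<noteq> 0 \<and> e ** g = diag1 p c"
proof -
  have step: "p \<notin> S \<longrightarrow> (\<exists>e\<in>SL. \<forall>s\<in>S. (e ** g) *v ev s 1 = ev s 1)" for S :: "'n set"
  proof -
    have "finite S" by simp
    then show ?thesis
    proof (induction S rule: finite_induct)
      case empty
      show ?case using SL_one by auto
    next
      case (insert k S)
      show ?case
      proof
        assume p: "p \<notin> insert k S"
        then obtain e where e: "e \<in> SL" "\<forall>s\<in>S. (e ** g) *v ev s 1 = ev s 1" using insert.IH by auto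
        let ?A = "e ** g"
        have Ainv: "invertible ?A" using e(1) g by (simp add: SL_invertible invertible_mult)
        obtain i where i: "i \<notin> S" "(?A *v ev k 1)$i \<noteq> 0"
          using not_in_span[OF Ainv e(2) insert.hyps(2)] by blast
        obtain e' c where e': "e' \<in> SL" "\<forall>y. (\<forall>r. r \<notin> S \<longrightarrow> y$r = 0) \<longrightarrow> e' *v y = y"
          "c \<noteq> 0" "e' *v (?A *v ev k 1) = ev k c"
          using elim[OF insert.hyps(2) i] by blast
        have kp: "k \<noteq> p" using p by auto
        define e'' where "e'' = diag2 k p (inverse c) ** e' ** e"
        have "e'' \<in> SL" unfolding e''_def using e(1) e'(1) e'(3) kp by (intro SL_mult diag2_SL) auto
        moreover have "\<forall>s\<in>insert k S. (e'' ** g) *v ev s 1 = ev s 1"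
        proof
          fix s assume s: "s \<in> insert k S"
          show "(e'' ** g) *v ev s 1 = ev s 1"
          proof (cases "s = k")
            case True
            have "(e'' ** g) *v ev s 1 = diag2 k p (inverse c) *v (e' *v (?A *v ev k 1))"
              using True by (simp add: e''_def mult_vec_assoc)
            also have "\<dots> = ev k 1" using e'(3,4) kp by (simp add: diag2_def dg_mult_vec vec_eq_iff)
            finally show ?thesis using True by simp
          next
            case False
            then have sS: "s \<in> S" using s by auto
            have "(e'' ** g) *v ev s 1 = diag2 k p (inverse c) *v (e' *v (?A *v ev s 1))"
              by (simp add: e''_def mult_vec_assoc)
            also have "\<dots> = diag2 k p (inverse c) *v (e' *v ev s 1)" using e(2) sS by simp
            also have "e' *v ev s 1 = ev s 1" using e'(2) sS by auto
            also have "diag2 k p (inverse c) *v ev s 1 = ev s 1"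
              using sS insert.hyps(2) p by (intro diag2_fix) auto
            finally show ?thesis .
          qed
        qed
        ultimately show "\<exists>e\<in>SL. \<forall>s\<in>insert k S. (e ** g) *v ev s 1 = ev s 1" by blast
      qed
    qed
  qed
  obtain e where e: "e \<in> SL" "\<forall>s\<in>UNIV - {p}. (e ** g) *v ev s 1 = ev s 1" using step[of "UNIV - {p}"] by auto
  let ?A = "e ** g"
  have Ainv: "invertible ?A" using e(1) g by (simp add: SL_invertible invertible_mult)
  obtain i where i: "i \<notin> UNIV - {p}" "(?A *v ev p 1)$i \<noteq> 0"
    using not_in_span[OF Ainv e(2)] by blast
  obtain e' c where e': "e' \<in> SL" "\<forall>y. (\<forall>r. r \<notin> UNIV - {p} \<longrightarrow> y$r = 0) \<longrightarrow> e' *v y = y"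
    "c \<noteq> 0" "e' *v (?A *v ev p 1) = ev p c"
    using elim[of p "UNIV - {p}", OF _ i] by blast
  have cols: "((e' ** e) ** g) *v ev l 1 = diag1 p c *v ev l 1" for l
  proof (cases "l = p")
    case True
    then show ?thesis using e'(4) by (simp add: mult_vec_assoc diag1_def dg_mult_vec vec_eq_iff)
  next
    case False
    have "((e' ** e) ** g) *v ev l 1 = e' *v (?A *v ev l 1)" by (simp add: mult_vec_assoc)
    also have "\<dots> = e' *v ev l 1" using e(2) False by simp
    also have "\<dots> = ev l 1" using e'(2) False by auto
    finally show ?thesis using False by (simp add: diag1_def dg_mult_vec vec_eq_iff)
  qed
  have "(e' ** e) ** g = diag1 p c"
    using cols by (simp add: vec_eq_iff col_entry[symmetric])
  moreover have "e' ** e \<in> SL" using e e' by (simp add: SL_mult)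
  ultimately show ?thesis using e'(3) by blast
qed

lemma conj_SL:
  fixes h :: "'a::division_ring^'n^'n"
  assumes h: "invertible h"
    and gen: "\<And>i j a. i \<noteq> j \<Longrightarrow> h ** transvection i j a ** inv\<^bsub>GL\<^esub> h \<in> SL"
  shows "x \<in> SL \<Longrightarrow> h ** x ** inv\<^bsub>GL\<^esub> h \<in> SL"
proof -
  let ?K = "{x. invertible x \<and> h ** x ** inv\<^bsub>GL\<^esub> h \<in> (SL::('a^'n^'n) set)}"
  have "subgroup ?K GL"
  proof (rule group.subgroupI[OF group_GL])
    show "?K \<subseteq> carrier GL" by auto
    show "?K \<noteq> {}" using h SL_one invertible_mat1 by (intro exI[of _ "mat 1"] notI) (auto simp: ex_in_conv[symmetric])
  next
    fix a assume a: "a \<in> ?K"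
    then have "h ** inv\<^bsub>GL\<^esub> a ** inv\<^bsub>GL\<^esub> h = inv\<^bsub>GL\<^esub> (h ** a ** inv\<^bsub>GL\<^esub> h)"
      using h by (simp add: GL_inv_prod invertible_mult GL_inv_inv matrix_mul_assoc)
    then show "inv\<^bsub>GL\<^esub> a \<in> ?K" using a SL_inv by auto
  next
    fix a b assume a: "a \<in> ?K" and b: "b \<in> ?K"
    have "h ** (a ** b) ** inv\<^bsub>GL\<^esub> h = (h ** a ** inv\<^bsub>GL\<^esub> h) ** (h ** b ** inv\<^bsub>GL\<^esub> h)"
      using h by (simp add: GL_cancel flip: matrix_mul_assoc)
    then show "a \<otimes>\<^bsub>GL\<^esub> b \<in> ?K" using a b by (auto simp: SL_mult invertible_mult)
  qed
  moreover have "transvection i j a \<in> ?K" if "i \<noteq> j" for i j a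
    using that gen trans_invertible by blast
  ultimately have "SL \<subseteq> ?K" by (rule SL_minimal)
  then show "x \<in> SL \<Longrightarrow> h ** x ** inv\<^bsub>GL\<^esub> h \<in> SL" by blast
qed

lemma diag1_inv: "c \<noteq> 0 \<Longrightarrow> inv\<^bsub>GL\<^esub> (diag1 p c) = diag1 p (inverse (c::'a::division_ring))"
  by (rule GL_inv_eq[OF diag1_invertible]) (auto simp: diag1_def dg_mult_left dg_nth vec_eq_iff mat1_entry)

lemma diag1_conj_SL:
  assumes "c \<noteq> 0" "x \<in> SL"
  shows "diag1 p c ** x ** inv\<^bsub>GL\<^esub> (diag1 p c) \<in> (SL::('a::division_ring^'n^'n) set)"
proof (rule conj_SL[OF diag1_invertible[OF assms(1)] _ assms(2)])
  fix i j :: 'n and a :: 'a assume ij: "i \<noteq> j"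
  have "diag1 p c ** transvection i j a ** inv\<^bsub>GL\<^esub> (diag1 p c) =
        transvection i j ((if i = p then c else 1) * a * (if j = p then inverse c else 1))"
    unfolding diag1_inv[OF assms(1)] using ij assms(1) by (auto simp: diag1_def dg_mult_left dg_mult_right vec_eq_iff trans_entry)
  then show "diag1 p c ** transvection i j a ** inv\<^bsub>GL\<^esub> (diag1 p c) \<in> SL" using ij by (simp add: trans_SL)
qed

lemma inv_cancel_l: "c \<noteq> 0 \<Longrightarrow> inverse c * (c * x) = (x::'a::division_ring)"
  by (simp add: mult.assoc[symmetric])

lemma diag1_comm_SL:
  fixes c c' :: "'a::division_ring"
  assumes "c \<noteq> 0" "c' \<noteq> 0" "p \<noteq> (q::'n)"
  shows "diag1 p c ** diag1 p c' ** inv\<^bsub>GL\<^esub> (diag1 p c) ** inv\<^bsub>GL\<^esub> (diag1 p c') \<in> (SL::('a^'n^'n) set)"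
proof -
  have "diag1 p c ** diag1 p c' ** inv\<^bsub>GL\<^esub> (diag1 p c) ** inv\<^bsub>GL\<^esub> (diag1 p c') =
        diag2 p q (c * c') ** diag2 p q (inverse c) ** diag2 p q (inverse c')"
    unfolding diag1_inv[OF assms(1)] diag1_inv[OF assms(2)]
    using assms by (auto simp: diag1_def diag2_def dg_mult_left dg_mult_right vec_eq_iff dg_nth
        nonzero_inverse_mult_distrib mult.assoc inv_cancel_l)
  also have "\<dots> \<in> SL" using assms by (intro SL_mult diag2_SL) auto
  finally show ?thesis .
qed

lemma SL_sub_normal:
  fixes N :: "('a::division_ring^'n^'n) set"
  assumes card: "CARD('n) \<ge> 2" and N: "subgroup N GL" and SLN: "SL \<subseteq> N"
  shows "N \<lhd> GL"
proof -
  obtain p q :: 'n where pq: "p \<noteq> q" using two_elems[OF card] by blast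
  have Ninv: "invertible n" if "n \<in> N" for n using subgroup.subset[OF N] that by auto
  have Nmul: "a ** b \<in> N" if "a \<in> N" "b \<in> N" for a b using subgroup.m_closed[OF N] that by fastforce
  have Ni: "inv\<^bsub>GL\<^esub> a \<in> N" if "a \<in> N" for a using subgroup.m_inv_closed[OF N] that by fastforce
  have "\<forall>g\<in>carrier GL. \<forall>n\<in>N. g \<otimes>\<^bsub>GL\<^esub> n \<otimes>\<^bsub>GL\<^esub> inv\<^bsub>GL\<^esub> g \<in> N"
  proof (intro ballI)
    fix g n :: "'a^'n^'n" assume g: "g \<in> carrier GL" and n: "n \<in> N"
    have ginv: "invertible g" using g by simp
    obtain e1 c1 where e1: "e1 \<in> SL" "c1 \<noteq> 0" "e1 ** g = diag1 p c1" using decomp[OF ginv pq] by blast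
    obtain e2 c2 where e2: "e2 \<in> SL" "c2 \<noteq> 0" "e2 ** n = diag1 p c2" using decomp[OF Ninv[OF n] pq] by blast
    define a where "a = inv\<^bsub>GL\<^esub> e1"
    define b where "b = inv\<^bsub>GL\<^esub> e2"
    define d1 where "d1 = diag1 p c1"
    define d2 where "d2 = diag1 p c2"
    have aSL: "a \<in> SL" "b \<in> SL" using e1 e2 SL_inv a_def b_def by auto
    have inv: "invertible a" "invertible b" "invertible d1" "invertible d2"
      using aSL SL_invertible diag1_invertible e1(2) e2(2) d1_def d2_def by auto
    have ga: "g = a ** d1" unfolding a_def d1_def using e1(3) SL_invertible[OF e1(1)]
      by (metis GL_cancel(1))
    have nb: "n = b ** d2" unfolding b_def d2_def using e2(3) SL_invertible[OF e2(1)]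
      by (metis GL_cancel(1))
    have d2N: "d2 \<in> N"
    proof -
      have "inv\<^bsub>GL\<^esub> b ** n = d2" using inv by (simp add: nb GL_cancel)
      moreover have "inv\<^bsub>GL\<^esub> b ** n \<in> N" using SLN aSL n by (intro Nmul Ni) auto
      ultimately show ?thesis by simp
    qed
    have "g ** n ** inv\<^bsub>GL\<^esub> g =
      a ** (d1 ** b ** inv\<^bsub>GL\<^esub> d1) ** (d1 ** d2 ** inv\<^bsub>GL\<^esub> d1 ** inv\<^bsub>GL\<^esub> d2) ** (d2 ** inv\<^bsub>GL\<^esub> a ** inv\<^bsub>GL\<^esub> d2) ** d2"
      using inv by (simp add: ga nb GL_inv_prod GL_cancel flip: matrix_mul_assoc)
    also have "\<dots> \<in> N"
    proof -
      have f0: "a \<in> N" using aSL SLN by auto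
      have f1: "d1 ** b ** inv\<^bsub>GL\<^esub> d1 \<in> N" using diag1_conj_SL[OF e1(2) aSL(2)] SLN d1_def by auto
      have f2: "d1 ** d2 ** inv\<^bsub>GL\<^esub> d1 ** inv\<^bsub>GL\<^esub> d2 \<in> N"
        using diag1_comm_SL[OF e1(2) e2(2) pq] SLN d1_def d2_def by auto
      have f3: "d2 ** inv\<^bsub>GL\<^esub> a ** inv\<^bsub>GL\<^esub> d2 \<in> N"
        using diag1_conj_SL[OF e2(2) SL_inv[OF aSL(1)]] SLN d2_def by auto
      show ?thesis by (rule Nmul[OF Nmul[OF Nmul[OF Nmul[OF f0 f1] f2] f3] d2N])
    qed
    finally show "g \<otimes>\<^bsub>GL\<^esub> n \<otimes>\<^bsub>GL\<^esub> inv\<^bsub>GL\<^esub> g \<in> N" by simp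
  qed
  then show ?thesis using group.normal_inv_iff[OF group_GL] N by blast
qed




lemma trans_noncentral:
  fixes c :: "'a::division_ring"
  assumes "c \<noteq> 0" "p \<noteq> (q::'n::finite)"
  shows "transvection p q c \<notin> group_center GL"
proof
  assume "transvection p q c \<in> group_center GL"
  then have "transvection p q c ** transvection q p 1 = transvection q p 1 ** transvection p q c"
    using trans_invertible[of q p 1] assms(2) by (auto simp: group_center_def)
  then have "(transvection p q c ** transvection q p 1)$p$p = (transvection q p 1 ** transvection p q c)$p$p"
    by simp
  then show False using assms by (simp add: trans_mult_right trans_mult_left trans_entry)
qed

lemma chain_step:
  fixes H H' :: "('a::division_ring^'n^'n) set"
  assumes inf: "infinite (UNIV::'a set)" and card: "CARD('n) \<ge> 2"
    and H: "subgroup H GL" and H': "subgroup H' GL" and HH': "H' \<subseteq> H"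
    and SLH: "SL \<subseteq> H" and nc: "\<not> H' \<subseteq> group_center GL"
    and alt: "H' \<lhd> GL\<lparr>carrier := H\<rparr> \<or> finite (rcosets\<^bsub>GL\<lparr>carrier := H\<rparr>\<^esub> H')"
  shows "SL \<subseteq> H'"
proof -
  interpret G: group "GL::('a^'n^'n) monoid" by (rule group_GL)
  have Hc: "H \<subseteq> carrier GL" using subgroup.subset[OF H] .
  have H'c: "H' \<subseteq> carrier GL" using subgroup.subset[OF H'] .
  have Hmul: "a ** b \<in> H" if "a \<in> H" "b \<in> H" for a b using subgroup.m_closed[OF H] that by fastforce
  have Hi: "inv\<^bsub>GL\<^esub> a \<in> H" if "a \<in> H" for a using subgroup.m_inv_closed[OF H] that by fastforce
  from alt show ?thesis
  proof
    assume nrm: "H' \<lhd> GL\<lparr>carrier := H\<rparr>"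
    show ?thesis
    proof (rule KL[OF inf card H' _ nc])
      fix e m :: "'a^'n^'n" assume e: "e \<in> SL" and m: "m \<in> H'"
      have eH: "e \<in> H" using e SLH by auto
      have "e \<otimes>\<^bsub>GL\<lparr>carrier := H\<rparr>\<^esub> m \<otimes>\<^bsub>GL\<lparr>carrier := H\<rparr>\<^esub> inv\<^bsub>GL\<lparr>carrier := H\<rparr>\<^esub> e \<in> H'"
        using normal.inv_op_closed2[OF nrm, of e m] eH m by simp
      then show "e ** m ** inv\<^bsub>GL\<^esub> e \<in> H'" using G.m_inv_consistent[OF H eH] by simp
    qed
  next
    assume fin: "finite (rcosets\<^bsub>GL\<lparr>carrier := H\<rparr>\<^esub> H')"
    define R where "R = {H' #>\<^bsub>GL\<^esub> a | a. a \<in> H}"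
    have RR: "rcosets\<^bsub>GL\<lparr>carrier := H\<rparr>\<^esub> H' = R"
      unfolding R_def RCOSETS_def r_coset_def by auto
    have finR: "finite R" using fin RR by simp
    have Rsub: "X \<subseteq> carrier GL" if "X \<in> R" for X
      using that H'c Hc unfolding R_def by (auto simp: r_coset_def intro!: invertible_mult)
    have Aco: "X #>\<^bsub>GL\<^esub> g #>\<^bsub>GL\<^esub> h = X #>\<^bsub>GL\<^esub> (g ** h)" if "X \<in> R" "invertible g" "invertible h" for X g h
      using G.coset_mult_assoc[OF Rsub[OF that(1)], of g h] that by simp
    have Co1: "X #>\<^bsub>GL\<^esub> mat 1 = X" if "X \<in> R" for X
      using G.coset_mult_one[OF Rsub[OF that]] by simp
    have Rmul: "X #>\<^bsub>GL\<^esub> e \<in> R" if Xe: "X \<in> R" "e \<in> H" for X e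
    proof -
      obtain a where a: "X = H' #>\<^bsub>GL\<^esub> a" "a \<in> H" using Xe(1) unfolding R_def by blast
      have "X #>\<^bsub>GL\<^esub> e = H' #>\<^bsub>GL\<^esub> (a ** e)"
        using a G.coset_mult_assoc[OF H'c, of a e] Hc Xe(2) by auto
      then show ?thesis unfolding R_def using a(2) Xe(2) Hmul by blast
    qed
    define C where "C = {c \<in> H. \<forall>X\<in>R. X #>\<^bsub>GL\<^esub> c = X}"
    have CH: "C \<subseteq> H" unfolding C_def by auto
    have CH': "C \<subseteq> H'"
    proof
      fix c assume c: "c \<in> C"
      have "H' \<in> R" unfolding R_def using subgroup.one_closed[OF H] H'c
        by (intro CollectI exI[of _ "mat 1"]) (simp add: G.coset_mult_one[OF H'c, simplified])
      then have "H' #>\<^bsub>GL\<^esub> c = H'" using c unfolding C_def by blast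
      moreover have "mat 1 ** c \<in> H' #>\<^bsub>GL\<^esub> c" using subgroup.one_closed[OF H'] 
        unfolding r_coset_def by force
      ultimately show "c \<in> H'" by simp
    qed
    have Csub: "subgroup C GL"
    proof (rule G.subgroupI)
      show "C \<subseteq> carrier GL" using CH Hc by auto
      show "C \<noteq> {}" unfolding C_def using subgroup.one_closed[OF H] Rsub
        by (intro ex_in_conv[THEN iffD1] exI[of _ "mat 1"]) (auto simp: G.coset_mult_one[simplified])
    next
      fix a assume a: "a \<in> C"
      have aH: "a \<in> H" using a CH by auto
      have "X #>\<^bsub>GL\<^esub> inv\<^bsub>GL\<^esub> a = X" if X: "X \<in> R" for X
      proof -
        have "X #>\<^bsub>GL\<^esub> inv\<^bsub>GL\<^esub> a = (X #>\<^bsub>GL\<^esub> a) #>\<^bsub>GL\<^esub> inv\<^bsub>GL\<^esub> a"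
          using a X unfolding C_def by auto
        also have "\<dots> = X #>\<^bsub>GL\<^esub> (a ** inv\<^bsub>GL\<^esub> a)"
          using G.coset_mult_assoc[OF Rsub[OF X], of a "inv\<^bsub>GL\<^esub> a"] aH Hc G.inv_closed by auto
        also have "\<dots> = X" using aH Hc G.coset_mult_one[OF Rsub[OF X]] by auto
        finally show ?thesis .
      qed
      then show "inv\<^bsub>GL\<^esub> a \<in> C" unfolding C_def using Hi aH by blast
    next
      fix a b assume a: "a \<in> C" and b: "b \<in> C"
      have "X #>\<^bsub>GL\<^esub> (a ** b) = X" if X: "X \<in> R" for X
      proof -
        have "X #>\<^bsub>GL\<^esub> (a ** b) = (X #>\<^bsub>GL\<^esub> a) #>\<^bsub>GL\<^esub> b"
          using G.coset_mult_assoc[OF Rsub[OF X], of a b] a b CH Hc by auto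
        also have "\<dots> = X" using a b X unfolding C_def by auto
        finally show ?thesis .
      qed
      moreover have "a ** b \<in> H" using a b CH by (intro Hmul) auto
      ultimately show "a \<otimes>\<^bsub>GL\<^esub> b \<in> C" unfolding C_def by auto
    qed
    show ?thesis
    proof -
      have "SL \<subseteq> C"
      proof (rule KL[OF inf card Csub])
        fix e m :: "'a^'n^'n" assume e: "e \<in> SL" and m: "m \<in> C"
        have eH: "e \<in> H" using e SLH by auto
        have mH: "m \<in> H" using m CH by auto
        have "X #>\<^bsub>GL\<^esub> (e ** m ** inv\<^bsub>GL\<^esub> e) = X" if X: "X \<in> R" for X
        proof -
          have iv: "invertible e" "invertible m" "invertible (inv\<^bsub>GL\<^esub> e)" "invertible (e ** m)"
            using eH mH Hc by (auto intro!: invertible_mult)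
          have A: "X #>\<^bsub>GL\<^esub> g #>\<^bsub>GL\<^esub> h = X #>\<^bsub>GL\<^esub> (g ** h)" if "invertible g" "invertible h" for g h
            using G.coset_mult_assoc[OF Rsub[OF X], of g h] that by simp
          have "X #>\<^bsub>GL\<^esub> (e ** m ** inv\<^bsub>GL\<^esub> e) = (X #>\<^bsub>GL\<^esub> (e ** m)) #>\<^bsub>GL\<^esub> inv\<^bsub>GL\<^esub> e"
            using A[OF iv(4) iv(3)] by simp
          also have "X #>\<^bsub>GL\<^esub> (e ** m) = (X #>\<^bsub>GL\<^esub> e) #>\<^bsub>GL\<^esub> m"
            using A[OF iv(1) iv(2)] by simp
          also have "(X #>\<^bsub>GL\<^esub> e) #>\<^bsub>GL\<^esub> m = X #>\<^bsub>GL\<^esub> e" using m Rmul[OF X eH] unfolding C_def by auto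
          also have "(X #>\<^bsub>GL\<^esub> e) #>\<^bsub>GL\<^esub> inv\<^bsub>GL\<^esub> e = X #>\<^bsub>GL\<^esub> (e ** inv\<^bsub>GL\<^esub> e)"
            using G.coset_mult_assoc[OF Rsub[OF X], of e "inv\<^bsub>GL\<^esub> e"] eH Hc G.inv_closed by auto
          also have "\<dots> = X" using eH Hc G.coset_mult_one[OF Rsub[OF X]] by auto
          finally show ?thesis .
        qed
        moreover have "e ** m ** inv\<^bsub>GL\<^esub> e \<in> H" using eH mH Hmul Hi by blast
        ultimately show "e ** m ** inv\<^bsub>GL\<^esub> e \<in> C" unfolding C_def by blast
      next
        obtain p q :: 'n where pq: "p \<noteq> q" using two_elems[OF card] by blast
        define f where "f = (\<lambda>a::'a. \<lambda>X\<in>R. X #>\<^bsub>GL\<^esub> transvection p q a)"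
        have tH: "transvection p q a \<in> H" for a using SLH trans_SL[OF pq] by blast
        have "f ` UNIV \<subseteq> PiE R (\<lambda>_. R)"
          using Rmul[OF _ tH] unfolding f_def by auto
        then have "finite (f ` UNIV)" using finR by (meson finite_PiE finite_subset)
        then have "\<not> inj f" using inf finite_imageD by blast
        then obtain a b where ab: "a \<noteq> b" "f a = f b" unfolding inj_def by blast
        have tC: "transvection p q (a - b) \<in> C"
        proof -
          let ?ta = "transvection p q a" and ?tb = "transvection p q b"
          have taH: "?ta \<in> H" "?tb \<in> H" using SLH trans_SL[OF pq] by auto
          have eq: "transvection p q (a - b) = ?ta ** inv\<^bsub>GL\<^esub> ?tb"
            using pq by (simp add: trans_inv trans_add)
          have "X #>\<^bsub>GL\<^esub> (?ta ** inv\<^bsub>GL\<^esub> ?tb) = X" if X: "X \<in> R" for X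
          proof -
            have "X #>\<^bsub>GL\<^esub> ?ta = X #>\<^bsub>GL\<^esub> ?tb" using fun_cong[OF ab(2), of X] X unfolding f_def by simp
            moreover have "X #>\<^bsub>GL\<^esub> (?ta ** inv\<^bsub>GL\<^esub> ?tb) = (X #>\<^bsub>GL\<^esub> ?ta) #>\<^bsub>GL\<^esub> inv\<^bsub>GL\<^esub> ?tb"
              using Aco[OF X trans_invertible[OF pq] GL_inv_mult(3)[OF trans_invertible[OF pq]]] by simp
            moreover have "(X #>\<^bsub>GL\<^esub> ?tb) #>\<^bsub>GL\<^esub> inv\<^bsub>GL\<^esub> ?tb = X"
              using Aco[OF X trans_invertible[OF pq] GL_inv_mult(3)[OF trans_invertible[OF pq]]]
                Co1[OF X] by (simp add: trans_inv[OF pq] trans_add[OF pq] trans_zero)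
            ultimately show ?thesis by simp
          qed
          moreover have "?ta ** inv\<^bsub>GL\<^esub> ?tb \<in> H" using taH Hmul Hi by blast
          ultimately show ?thesis unfolding C_def eq by blast
        qed
        have "a - b \<noteq> 0" using ab(1) by simp
        then show "\<not> C \<subseteq> group_center GL" using tC trans_noncentral[OF _ pq] by blast
      qed
      then show ?thesis using CH' by blast
    qed
  qed
qed




lemma almost_SL:
  fixes N :: "('a::division_ring^'n^'n) set"
  assumes inf: "infinite (UNIV :: 'a set)" and card: "CARD('n) \<ge> 2"
    and nc: "\<not> N \<subseteq> group_center (GL :: ('a ^'n^'n) monoid)"
    and as: "almost_subnormal N (GL :: ('a ^'n^'n) monoid)"
  shows "SL \<subseteq> N"
proof -
  obtain r Hs where Hs: "Hs 0 = carrier (GL :: ('a ^'n^'n) monoid)" "Hs r = N"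
    "\<forall>i\<le>r. subgroup (Hs i) (GL :: ('a ^'n^'n) monoid)"
    "\<forall>i<r. Hs (Suc i) \<subseteq> Hs i \<and> (Hs (Suc i) \<lhd> GL\<lparr>carrier := Hs i\<rparr> \<or>
         finite (rcosets\<^bsub>GL\<lparr>carrier := Hs i\<rparr>\<^esub> Hs (Suc i)))"
    using as unfolding almost_subnormal_def by blast
  have mono: "Hs r \<subseteq> Hs i" if "i \<le> r" for i
    using that
  proof (induction i rule: inc_induct)
    case base then show ?case by simp
  next
    case (step n) then show ?case using Hs(4) by blast
  qed
  have "i \<le> r \<longrightarrow> SL \<subseteq> Hs i" for i
  proof (induction i)
    case 0 then show ?case using Hs(1) SL_carrier by auto
  next
    case (Suc i)
    show ?case
    proof
      assume i: "Suc i \<le> r"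
      show "SL \<subseteq> Hs (Suc i)"
      proof (rule chain_step[OF inf card])
        show "subgroup (Hs i) GL" "subgroup (Hs (Suc i)) GL" using Hs(3) i by auto
        show "Hs (Suc i) \<subseteq> Hs i" using Hs(4) i by auto
        show "SL \<subseteq> Hs i" using Suc i by auto
        show "\<not> Hs (Suc i) \<subseteq> group_center GL" using nc mono[OF i] Hs(2) by blast
        show "Hs (Suc i) \<lhd> GL\<lparr>carrier := Hs i\<rparr> \<or> finite (rcosets\<^bsub>GL\<lparr>carrier := Hs i\<rparr>\<^esub> Hs (Suc i))"
          using Hs(4) i by auto
      qed
    qed
  qed
  then show ?thesis using Hs(2) by blast
qed

theorem theorem3p3:
  fixes N :: "('a::division_ring ^'n^'n) set"
  assumes "infinite (UNIV :: 'a set)"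
    and "CARD('n) \<ge> 2"
    and "subgroup N (GL :: ('a ^'n^'n) monoid)"
    and "\<not> N \<subseteq> group_center (GL :: ('a ^'n^'n) monoid)"
  shows "(almost_subnormal N (GL :: ('a ^'n^'n) monoid) \<longleftrightarrow> subnormal N (GL :: ('a ^'n^'n) monoid))
       \<and> (subnormal N (GL :: ('a ^'n^'n) monoid) \<longleftrightarrow> N \<lhd> (GL :: ('a ^'n^'n) monoid))
       \<and> (N \<lhd> (GL :: ('a ^'n^'n) monoid) \<longleftrightarrow> (SL :: ('a ^'n^'n) set) \<subseteq> N)"
proof -
  have a4: "almost_subnormal N (GL :: ('a ^'n^'n) monoid) \<Longrightarrow> SL \<subseteq> N"
    using almost_SL assms by blast
  have n43: "SL \<subseteq> N \<Longrightarrow> N \<lhd> (GL :: ('a ^'n^'n) monoid)"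
    using SL_sub_normal assms(2,3) by blast
  have GLc: "(GL :: ('a ^'n^'n) monoid)\<lparr>carrier := carrier GL\<rparr> = GL" by (simp add: GL_def)
  have n32: "N \<lhd> (GL :: ('a ^'n^'n) monoid) \<Longrightarrow> subnormal N (GL :: ('a ^'n^'n) monoid)"
  proof -
    assume nN: "N \<lhd> (GL :: ('a ^'n^'n) monoid)"
    show ?thesis unfolding subnormal_def
    proof (intro exI[of _ "1::nat"] exI[of _ "\<lambda>i. if i = 0 then carrier (GL :: ('a ^'n^'n) monoid) else N"] conjI allI impI)
      fix i :: nat assume "i \<le> 1"
      show "subgroup (if i = 0 then carrier GL else N) (GL :: ('a ^'n^'n) monoid)"
        using assms(3) group.subgroup_self[OF group_GL] by auto
    next
      fix i :: nat assume "i < 1"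
      then have i0: "i = 0" by simp
      show "(if Suc i = 0 then carrier GL else N) \<subseteq> (if i = 0 then carrier (GL :: ('a ^'n^'n) monoid) else N)"
        using i0 subgroup.subset[OF assms(3)] by simp
      show "(if Suc i = 0 then carrier GL else N) \<lhd> (GL :: ('a ^'n^'n) monoid)\<lparr>carrier := if i = 0 then carrier GL else N\<rparr>"
        using i0 nN GLc by (simp del: GL_carrier)
    qed simp_all
  qed
  have n21: "subnormal N (GL :: ('a ^'n^'n) monoid) \<Longrightarrow> almost_subnormal N (GL :: ('a ^'n^'n) monoid)"
    unfolding subnormal_def almost_subnormal_def by blast
  show ?thesis using a4 n43 n32 n21 by blast
qed


end
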